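(* Let $n\ge 2$ and let $A,B$ be positive words (words in the letters $\sigma_1,\dots,\sigma_{n-1},x_1,\dots,x_{n-1}$), and let $i,k\in\{1,\dots,n-1\}$. (1) Suppose $\sigma_i A\doteq \sigma_k B$. If $k=i$ then $A\doteq B$. If $|k-i|=1$ then there is a positive word $Z$ with $A\doteq \sigma_k\sigma_i Z$ and $B\doteq \sigma_i\sigma_k Z$. If $|k-i|\ge 2$ then there is a positive word $Z$ with $A\doteq \sigma_k Z$ and $B\doteq\sigma_i Z$. (2) Suppose $\sigma_i A\doteq x_k B$. If $|k-i|=1$ then there is a positive word $Z$ with $A\doteq \sigma_k x_i Z$ and $B\doteq \sigma_i\sigma_k Z$. If $|k-i|\ne 1$ then there is a positive word $Z$ with $A\doteq x_k Z$ and $B\doteq \sigma_i Z$. (3) Suppose $x_i A\doteq x_k B$. If $k=i$ then $A\doteq B$. If $|k-i|\ge 2$ then there is a positive word $Z$ with $A\doteq x_k Z$ and $B\doteq x_i Z$. The case $|k-i|=1$ is impossible, i.e. $x_iA\doteq x_kB$ never holds when $|k-i|=1$. The same statements hold for multiples on the right, i.e. with all words written in reverse order: e.g. if $A\sigma_i\doteq B\sigma_k$ with $|k-i|=1$ then $A\doteq Z\sigma_i\sigma_k$, $B\doteq Z\sigma_k\sigma_i$; if $A\sigma_i\doteq Bx_k$ with $|k-i|=1$ then $A\doteq Z x_i\sigma_k$, $B\doteq Z\sigma_k\sigma_i$; if $Ax_i\doteq Bx_k$ with $|k-i|=1$ this is impossible; and analogously in the remaining cases.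
   Context: Fix $n\ge 2$. The positive singular braid monoid $SB_n^+$ is the monoid with generators $\sigma_1,\dots,\sigma_{n-1},x_1,\dots,x_{n-1}$ and relations: $\sigma_i\sigma_j=\sigma_j\sigma_i$ and $x_ix_j=x_jx_i$ if $|i-j|>1$; $x_i\sigma_j=\sigma_jx_i$ if $|i-j|\ne 1$; $\sigma_i\sigma_{i+1}\sigma_i=\sigma_{i+1}\sigma_i\sigma_{i+1}$; $\sigma_i\sigma_{i+1}x_i=x_{i+1}\sigma_i\sigma_{i+1}$; $\sigma_{i+1}\sigma_ix_{i+1}=x_i\sigma_{i+1}\sigma_i$ (for all indices for which these make sense). A positive word is a word in the letters $\sigma_i,x_i$ (possibly empty). For positive words $A,B$, $A\doteq B$ ("positively equal") means $A$ and $B$ represent the same element of $SB_n^+$. *)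

theory Defs
  imports Main
begin

text \<open>Letters of the positive singular braid monoid: S i is sigma_i, X i is x_i.\<close>
datatype letter = S nat | X nat

definition valid_letter :: "nat \<Rightarrow> letter \<Rightarrow> bool" where
  "valid_letter n a = (case a of S i \<Rightarrow> 1 \<le> i \<and> i < n | X i \<Rightarrow> 1 \<le> i \<and> i < n)"

definition pword :: "nat \<Rightarrow> letter list \<Rightarrow> bool" where
  "pword n w = (\<forall>a\<in>set w. valid_letter n a)"

definition rels :: "nat \<Rightarrow> (letter list \<times> letter list) set" where
  "rels n =
     {([S i, S j], [S j, S i]) | i j. 1 \<le> i \<and> i < n \<and> 1 \<le> j \<and> j < n \<and> \<bar>int i - int j\<bar> > 1}
   \<union> {([X i, X j], [X j, X i]) | i j. 1 \<le> i \<and> i < n \<and> 1 \<le> j \<and> j < n \<and> \<bar>int i - int j\<bar> > 1}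
   \<union> {([X i, S j], [S j, X i]) | i j. 1 \<le> i \<and> i < n \<and> 1 \<le> j \<and> j < n \<and> \<bar>int i - int j\<bar> \<noteq> 1}
   \<union> {([S i, S (i+1), S i], [S (i+1), S i, S (i+1)]) | i. 1 \<le> i \<and> i + 1 < n}
   \<union> {([S i, S (i+1), X i], [X (i+1), S i, S (i+1)]) | i. 1 \<le> i \<and> i + 1 < n}
   \<union> {([S (i+1), S i, X (i+1)], [X i, S (i+1), S i]) | i. 1 \<le> i \<and> i + 1 < n}"

definition step :: "nat \<Rightarrow> (letter list \<times> letter list) set" where
  "step n = {(u @ l @ v, u @ r @ v) | u l r v. (l, r) \<in> rels n}"

definition peq :: "nat \<Rightarrow> letter list \<Rightarrow> letter list \<Rightarrow> bool" where
  "peq n A B = ((A, B) \<in> (step n \<union> (step n)\<inverse>)\<^sup>*)"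

end

theory Submission
  imports Defs
begin

definition adj :: "nat \<Rightarrow> nat \<Rightarrow> bool" where
  "adj i j = (i + 1 = j \<or> j + 1 = i)"

fun cm :: "letter \<Rightarrow> letter \<Rightarrow> letter list option" where
  "cm (S i) (S j) = (if i = j then Some [] else if adj i j then Some [S j, S i] else Some [S j])"
| "cm (X i) (X j) = (if i = j then Some [] else if adj i j then None else Some [X j])"
| "cm (S i) (X j) = (if adj i j then Some [S j, X i] else Some [X j])"
| "cm (X i) (S j) = (if adj i j then Some [S j, S i] else Some [S j])"

datatype res = Ok "letter list" "letter list" | Fail | NoFuel

fun rv :: "nat \<Rightarrow> letter list \<Rightarrow> letter list \<Rightarrow> res"
and rv1 :: "nat \<Rightarrow> letter \<Rightarrow> letter list \<Rightarrow> res" where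
  "rv 0 p q = NoFuel"
| "rv (Suc f) [] q = Ok q []"
| "rv (Suc f) (a#p) q = (case rv1 f a q of Ok q1 a' \<Rightarrow> (case rv f p q1 of Ok q2 p2 \<Rightarrow> Ok q2 (a' @ p2) | r \<Rightarrow> r) | r \<Rightarrow> r)"
| "rv1 0 a q = NoFuel"
| "rv1 (Suc f) a [] = Ok [] [a]"
| "rv1 (Suc f) a (b#q) = (case cm a b of None \<Rightarrow> Fail | Some u \<Rightarrow> (case cm b a of None \<Rightarrow> Fail | Some u' \<Rightarrow>
      (case rv f u' q of Ok q3 u3 \<Rightarrow> Ok (u @ q3) u3 | r \<Rightarrow> r)))"

definition fuel :: nat where "fuel = 12"

definition cube_ok :: "letter \<Rightarrow> letter \<Rightarrow> letter \<Rightarrow> bool" where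
  "cube_ok a b c = (case (cm c a, cm c b, cm a c, cm b c) of
     (Some ua, Some ub, Some fac, Some fbc) \<Rightarrow>
       (case rv fuel ua ub of Fail \<Rightarrow> True | NoFuel \<Rightarrow> False
        | Ok q' p' \<Rightarrow> (case (cm a b, cm b a) of (Some u, Some u') \<Rightarrow>
             (case rv fuel u (fac @ q') of Ok T rest \<Rightarrow> rest = [] \<and> rv fuel (fbc @ p') (u' @ T) = Ok [] []
              | _ \<Rightarrow> False)
           | _ \<Rightarrow> False))
   | _ \<Rightarrow> True)"

lemma cSSS: "cube_ok (S i) (S j) (S k)"
  by (simp add: cube_ok_def fuel_def adj_def numeral_eq_Suc split: if_splits)
lemma cSSX: "cube_ok (S i) (S j) (X k)"
  by (simp add: cube_ok_def fuel_def adj_def numeral_eq_Suc split: if_splits)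
lemma cSXS: "cube_ok (S i) (X j) (S k)"
  by (simp add: cube_ok_def fuel_def adj_def numeral_eq_Suc split: if_splits)
lemma cSXX: "cube_ok (S i) (X j) (X k)"
  by (simp add: cube_ok_def fuel_def adj_def numeral_eq_Suc split: if_splits)
lemma cXSS: "cube_ok (X i) (S j) (S k)"
  by (simp add: cube_ok_def fuel_def adj_def numeral_eq_Suc split: if_splits)
lemma cXSX: "cube_ok (X i) (S j) (X k)"
  by (simp add: cube_ok_def fuel_def adj_def numeral_eq_Suc split: if_splits)
lemma cXXS: "cube_ok (X i) (X j) (S k)"
  by (simp add: cube_ok_def fuel_def adj_def numeral_eq_Suc split: if_splits)
lemma cXXX: "cube_ok (X i) (X j) (X k)"
  by (simp add: cube_ok_def fuel_def adj_def numeral_eq_Suc split: if_splits)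

lemma cube_all: "cube_ok a b c"
  by (cases a; cases b; cases c) (simp_all only: cSSS cSSX cSXS cSXX cXSS cXSX cXXS cXXX)

lemma pword_simps[simp]: "pword n [] = True" "pword n (a # A) = (valid_letter n a \<and> pword n A)"
  "pword n (A @ B) = (pword n A \<and> pword n B)" "pword n (rev A) = pword n A"
  by (auto simp: pword_def)

lemma peq_refl[simp]: "peq n A A" by (simp add: peq_def)

lemma peq_trans: "peq n A B \<Longrightarrow> peq n B C \<Longrightarrow> peq n A C"
  unfolding peq_def by (rule rtrancl_trans)

lemma peq_sym: "peq n A B \<Longrightarrow> peq n B A"
  unfolding peq_def
proof (induction rule: rtrancl_induct)
  case base then show ?case by simp
next
  case (step y z)
  then have "(z, y) \<in> step n \<union> (step n)\<inverse>" by auto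
  then show ?case using step(3) by (rule converse_rtrancl_into_rtrancl)
qed

lemma peq_step: "(A, B) \<in> step n \<Longrightarrow> peq n A B"
  unfolding peq_def by auto

lemma rels_peq: "(l, r) \<in> rels n \<Longrightarrow> peq n l r"
proof -
  assume "(l, r) \<in> rels n"
  then have "([] @ l @ [], [] @ r @ []) \<in> step n" unfolding step_def by blast
  then show ?thesis by (auto intro: peq_step)
qed

lemma step_app: "(x, y) \<in> step n \<Longrightarrow> (w @ x @ z, w @ y @ z) \<in> step n"
proof -
  assume "(x, y) \<in> step n"
  then obtain u l r v where "x = u @ l @ v" "y = u @ r @ v" "(l, r) \<in> rels n"
    unfolding step_def by blast
  then have "((w @ u) @ l @ (v @ z), (w @ u) @ r @ (v @ z)) \<in> step n"
    unfolding step_def by blast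
  then show ?thesis using \<open>x = _\<close> \<open>y = _\<close> by simp
qed

lemma peq_cong: "peq n A B \<Longrightarrow> peq n (w @ A @ z) (w @ B @ z)"
  unfolding peq_def
proof (induction rule: rtrancl_induct)
  case base then show ?case by simp
next
  case (step y z')
  then have "(w @ y @ z, w @ z' @ z) \<in> step n \<union> (step n)\<inverse>"
    using step_app by blast
  with step(3) show ?case by (rule rtrancl_into_rtrancl)
qed

lemma peq_append: "peq n A A' \<Longrightarrow> peq n B B' \<Longrightarrow> peq n (A @ B) (A' @ B')"
  using peq_cong[of n A A' "[]" B] peq_cong[of n B B' A' "[]"] peq_trans by auto

lemma peq_Cons: "peq n A B \<Longrightarrow> peq n (a # A) (a # B)"
  using peq_cong[of n A B "[a]" "[]"] by simp

lemma rels_len: "(l, r) \<in> rels n \<Longrightarrow> length l = length r"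
  unfolding rels_def by auto

lemma rels_pword: "(l, r) \<in> rels n \<Longrightarrow> pword n l \<and> pword n r"
  unfolding rels_def by (auto simp: valid_letter_def)

lemma step_len: "(x, y) \<in> step n \<Longrightarrow> length x = length y"
  unfolding step_def using rels_len by fastforce

lemma step_pword: "(x, y) \<in> step n \<Longrightarrow> pword n x = pword n y"
  unfolding step_def using rels_pword by fastforce

lemma peq_len: "peq n A B \<Longrightarrow> length A = length B"
  unfolding peq_def
  by (induction rule: rtrancl_induct) (auto dest: step_len)

lemma peq_pword: "peq n A B \<Longrightarrow> pword n A \<Longrightarrow> pword n B"
  unfolding peq_def
  by (induction rule: rtrancl_induct) (auto dest: step_pword)

lemma rels_rev: "(l, r) \<in> rels n \<Longrightarrow> (rev l, rev r) \<in> rels n \<or> (rev r, rev l) \<in> rels n"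
  unfolding rels_def by auto

lemma step_rev: "(x, y) \<in> step n \<Longrightarrow> (rev x, rev y) \<in> step n \<union> (step n)\<inverse>"
proof -
  assume "(x, y) \<in> step n"
  then obtain u l r v where xy: "x = u @ l @ v" "y = u @ r @ v" "(l, r) \<in> rels n"
    unfolding step_def by blast
  from rels_rev[OF xy(3)] show ?thesis
  proof
    assume "(rev l, rev r) \<in> rels n"
    then have "(rev v @ rev l @ rev u, rev v @ rev r @ rev u) \<in> step n" unfolding step_def by blast
    then show ?thesis using xy by simp
  next
    assume "(rev r, rev l) \<in> rels n"
    then have "(rev v @ rev r @ rev u, rev v @ rev l @ rev u) \<in> step n" unfolding step_def by blast
    then show ?thesis using xy by simp
  qed
qed

lemma peq_rev: "peq n A B \<Longrightarrow> peq n (rev A) (rev B)"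
  unfolding peq_def
proof (induction rule: rtrancl_induct)
  case base then show ?case by simp
next
  case (step y z)
  then have "(rev y, rev z) \<in> step n \<union> (step n)\<inverse>" using step_rev by blast
  with step(3) show ?case by (rule rtrancl_into_rtrancl)
qed

lemma cm_refl[simp]: "cm a a = Some []"
  by (cases a) (auto simp: adj_def)

lemma cm_None_sym: "cm a b = None \<Longrightarrow> cm b a = None"
  by (cases a; cases b) (auto simp: adj_def split: if_splits)

lemma cm_valid: "valid_letter n a \<Longrightarrow> valid_letter n b \<Longrightarrow> cm a b = Some u \<Longrightarrow> pword n u"
  by (cases a; cases b) (auto simp: adj_def valid_letter_def split: if_splits)

lemma cm_rels: "valid_letter n a \<Longrightarrow> valid_letter n b \<Longrightarrow> a \<noteq> b \<Longrightarrow> cm a b = Some u \<Longrightarrow> cm b a = Some u'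
   \<Longrightarrow> (a # u, b # u') \<in> rels n \<or> (b # u', a # u) \<in> rels n"
proof (cases a; cases b)
  fix i j assume *: "valid_letter n a" "valid_letter n b" "a \<noteq> b" "cm a b = Some u" "cm b a = Some u'"
    "a = S i" "b = S j"
  show ?thesis
  proof (cases "adj i j")
    case True
    then consider "j = i + 1" | "i = j + 1" by (auto simp: adj_def)
    then show ?thesis
    proof cases
      case 1 then show ?thesis using * unfolding rels_def by (auto simp: adj_def valid_letter_def)
    next
      case 2 then show ?thesis using * unfolding rels_def by (auto simp: adj_def valid_letter_def)
    qed
  next
    case False
    then show ?thesis using * unfolding rels_def by (auto simp: adj_def valid_letter_def)
  qed
next
  fix i j assume *: "valid_letter n a" "valid_letter n b" "a \<noteq> b" "cm a b = Some u" "cm b a = Some u'"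
    "a = S i" "b = X j"
  show ?thesis
  proof (cases "adj i j")
    case True
    then consider "j = i + 1" | "i = j + 1" by (auto simp: adj_def)
    then show ?thesis
    proof cases
      case 1 then show ?thesis using * unfolding rels_def by (auto simp: adj_def valid_letter_def)
    next
      case 2 then show ?thesis using * unfolding rels_def by (auto simp: adj_def valid_letter_def)
    qed
  next
    case False
    then show ?thesis using * unfolding rels_def by (auto simp: adj_def valid_letter_def)
  qed
next
  fix i j assume *: "valid_letter n a" "valid_letter n b" "a \<noteq> b" "cm a b = Some u" "cm b a = Some u'"
    "a = X i" "b = S j"
  show ?thesis
  proof (cases "adj i j")
    case True
    then consider "j = i + 1" | "i = j + 1" by (auto simp: adj_def)
    then show ?thesis
    proof cases
      case 1 then show ?thesis using * unfolding rels_def by (auto simp: adj_def valid_letter_def)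
    next
      case 2 then show ?thesis using * unfolding rels_def by (auto simp: adj_def valid_letter_def)
    qed
  next
    case False
    then show ?thesis using * unfolding rels_def by (auto simp: adj_def valid_letter_def)
  qed
next
  fix i j assume *: "valid_letter n a" "valid_letter n b" "a \<noteq> b" "cm a b = Some u" "cm b a = Some u'"
    "a = X i" "b = X j"
  then show ?thesis unfolding rels_def by (auto simp: adj_def valid_letter_def split: if_splits)
qed

lemma cm_sound: "valid_letter n a \<Longrightarrow> valid_letter n b \<Longrightarrow> cm a b = Some u \<Longrightarrow> cm b a = Some u'
   \<Longrightarrow> peq n (a # u) (b # u')"
  using cm_rels[of n a b u u'] rels_peq peq_sym by (cases "a = b") auto


section \<open>Reversing: soundness\<close>

lemma rv_sound:
  shows "rv f p q = Ok q' p' \<Longrightarrow> pword n p \<Longrightarrow> pword n q \<Longrightarrow> peq n (p @ q') (q @ p') \<and> pword n q' \<and> pword n p'"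
    and "rv1 f a q = Ok q' p' \<Longrightarrow> valid_letter n a \<Longrightarrow> pword n q \<Longrightarrow> peq n (a # q') (q @ p') \<and> pword n q' \<and> pword n p'"
proof (induction f p q and f a q arbitrary: q' p' and q' p' rule: rv_rv1.induct)
  case (1 p q) then show ?case by simp
next
  case (2 f q) then show ?case by simp
next
  case (3 f a p q)
  note h = "3.prems"
  obtain q1 a' q2 p2 where r1: "rv1 f a q = Ok q1 a'" and r2: "rv f p q1 = Ok q2 p2"
      and e: "q' = q2" "p' = a' @ p2"
      using h(1) by (auto split: res.splits)
  from "3.IH"(1)[OF r1] h have A: "peq n (a # q1) (q @ a')" "pword n q1" "pword n a'" by auto
  from "3.IH"(2)[OF r1 r2] h A have B: "peq n (p @ q2) (q1 @ p2)" "pword n q2" "pword n p2" by auto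
  have "peq n (a # p @ q2) (a # q1 @ p2)" using B(1) by (rule peq_Cons)
  moreover have "peq n (a # q1 @ p2) (q @ a' @ p2)" using peq_append[OF A(1) peq_refl[of n p2]] by simp
  ultimately show ?case
      using e A B by (auto intro: peq_trans)
next
  case (4 a q) then show ?case by simp
next
  case (5 f a) then show ?case by auto
next
  case (6 f a b q)
  note h = "6.prems"
  obtain u u' q3 where c1: "cm a b = Some u" and c2: "cm b a = Some u'"
      and r: "rv f u' q = Ok q3 p'" and e: "q' = u @ q3"
      using h(1) by (auto split: option.splits res.splits)
  have vu: "pword n u" "pword n u'" using cm_valid c1 c2 h by auto
  from "6.IH"[OF c1 c2 r] h vu have B: "peq n (u' @ q3) (q @ p')" "pword n q3" "pword n p'" by auto
  have "peq n (a # u @ q3) (b # u' @ q3)" using peq_append[OF cm_sound[OF _ _ c1 c2] peq_refl[of n q3]] h by simp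
  moreover have "peq n (b # u' @ q3) (b # q @ p')" using B(1) by (rule peq_Cons)
  ultimately show ?case
      using e vu B by (auto intro: peq_trans)
qed

section \<open>Reversing: completeness under the induction hypothesis\<close>

definition Rel :: "nat \<Rightarrow> letter \<Rightarrow> letter list \<Rightarrow> letter \<Rightarrow> letter list \<Rightarrow> bool" where
  "Rel n a A b B = (\<exists>u u' Z. cm a b = Some u \<and> cm b a = Some u' \<and> peq n A (u @ Z) \<and> peq n B (u' @ Z))"

definition Hyp :: "nat \<Rightarrow> nat \<Rightarrow> bool" where
  "Hyp n L = (\<forall>a A b B. length A < L \<longrightarrow> pword n (a # A) \<longrightarrow> pword n (b # B) \<longrightarrow> peq n (a # A) (b # B)
      \<longrightarrow> Rel n a A b B)"

lemma rv_complete: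
  assumes H: "Hyp n L"
  shows
  "(\<forall>Z1 Z2. rv f p q \<noteq> NoFuel \<longrightarrow> pword n (p @ Z1) \<longrightarrow> pword n (q @ Z2) \<longrightarrow> length (p @ Z1) \<le> L
      \<longrightarrow> peq n (p @ Z1) (q @ Z2) \<longrightarrow> (\<exists>q' p' Z. rv f p q = Ok q' p' \<and> peq n Z1 (q' @ Z) \<and> peq n Z2 (p' @ Z)))"
 and "(\<forall>Z1 Z2. rv1 f a q \<noteq> NoFuel \<longrightarrow> pword n (a # Z1) \<longrightarrow> pword n (q @ Z2) \<longrightarrow> length (a # Z1) \<le> L
      \<longrightarrow> peq n (a # Z1) (q @ Z2) \<longrightarrow> (\<exists>q' p' Z. rv1 f a q = Ok q' p' \<and> peq n Z1 (q' @ Z) \<and> peq n Z2 (p' @ Z)))"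
proof (induction f p q and f a q rule: rv_rv1.induct)
  case (1 p q) then show ?case by simp
next
  case (2 f q) then show ?case by auto
next
  case (3 f a p q)
  show ?case
  proof (intro allI impI)
    fix Z1 Z2
    assume h: "rv (Suc f) (a # p) q \<noteq> NoFuel" "pword n ((a # p) @ Z1)" "pword n (q @ Z2)"
      "length ((a # p) @ Z1) \<le> L" "peq n ((a # p) @ Z1) (q @ Z2)"
    have n1: "rv1 f a q \<noteq> NoFuel" using h(1) by (auto split: res.splits)
    from "3.IH"(1)[rule_format, OF n1, of "p @ Z1" Z2] h
    obtain q1 a' Y where r1: "rv1 f a q = Ok q1 a'" and Y: "peq n (p @ Z1) (q1 @ Y)" "peq n Z2 (a' @ Y)"
      by auto
    have n2: "rv f p q1 \<noteq> NoFuel" using h(1) r1 by (auto split: res.splits)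
    have pw: "pword n (q1 @ Y)" using peq_pword[OF Y(1)] h(2) by simp
    from "3.IH"(2)[OF r1, rule_format, OF n2, of Z1 Y] h pw Y
    obtain q2 p2 Z where r2: "rv f p q1 = Ok q2 p2" and Z: "peq n Z1 (q2 @ Z)" "peq n Y (p2 @ Z)"
      by auto
    have "peq n Z2 ((a' @ p2) @ Z)" using Y(2) peq_append[OF peq_refl[of n a'] Z(2)] by (auto intro: peq_trans)
    then show "\<exists>q' p' Z. rv (Suc f) (a # p) q = Ok q' p' \<and> peq n Z1 (q' @ Z) \<and> peq n Z2 (p' @ Z)"
      using r1 r2 Z by auto
  qed
next
  case (4 a q) then show ?case by simp
next
  case (5 f a)
  show ?case
  proof (intro allI impI)
    fix Z1 Z2 assume "peq n (a # Z1) ([] @ Z2)"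
    then have "peq n Z2 ([a] @ Z1)" by (auto intro: peq_sym)
    then show "\<exists>q' p' Z. rv1 (Suc f) a [] = Ok q' p' \<and> peq n Z1 (q' @ Z) \<and> peq n Z2 (p' @ Z)"
      by (intro exI[of _ "[]"] exI[of _ "[a]"] exI[of _ Z1]) simp
  qed
next
  case (6 f a b q)
  show ?case
  proof (intro allI impI)
    fix Z1 Z2
    assume h: "rv1 (Suc f) a (b # q) \<noteq> NoFuel" "pword n (a # Z1)" "pword n ((b # q) @ Z2)"
      "length (a # Z1) \<le> L" "peq n (a # Z1) ((b # q) @ Z2)"
    from H h have "Rel n a Z1 b (q @ Z2)" unfolding Hyp_def by auto
    then obtain u u' Y where c1: "cm a b = Some u" and c2: "cm b a = Some u'"
      and Y: "peq n Z1 (u @ Y)" "peq n (q @ Z2) (u' @ Y)" unfolding Rel_def by auto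
    have n1: "rv f u' q \<noteq> NoFuel" using h(1) c1 c2 by (auto split: res.splits)
    have pw: "pword n (u' @ Y)" using peq_pword[OF Y(2)] h(3) by simp
    have len: "length (u' @ Y) \<le> L" using peq_len[OF Y(2)] peq_len[OF h(5)] h(4) by simp
    from "6.IH"[OF c1 c2, rule_format, OF n1, of Y Z2] pw len h Y(2)
    obtain q3 u3 Z where r: "rv f u' q = Ok q3 u3" and Z: "peq n Y (q3 @ Z)" "peq n Z2 (u3 @ Z)"
      by (auto intro: peq_sym)
    have "peq n Z1 ((u @ q3) @ Z)" using Y(1) peq_append[OF peq_refl[of n u] Z(1)] by (auto intro: peq_trans)
    then show "\<exists>q' p' Z. rv1 (Suc f) a (b # q) = Ok q' p' \<and> peq n Z1 (q' @ Z) \<and> peq n Z2 (p' @ Z)"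
      using c1 c2 r Z by auto
  qed
qed


section \<open>Cube lemma\<close>

lemma cube:
  assumes H: "Hyp n L"
    and va: "valid_letter n a" and vb: "valid_letter n b" and vc: "valid_letter n c"
    and c1: "cm c a = Some ua" and c2: "cm c b = Some ub" and c3: "cm a c = Some fac" and c4: "cm b c = Some fbc"
    and pz: "pword n Z1" "pword n Z2" and len: "length (ua @ Z1) \<le> L"
    and e: "peq n (ua @ Z1) (ub @ Z2)"
  shows "\<exists>u u' Z. cm a b = Some u \<and> cm b a = Some u' \<and> peq n (fac @ Z1) (u @ Z) \<and> peq n (fbc @ Z2) (u' @ Z)"
proof -
  have ok: "cube_ok a b c" by (rule cube_all)
  have pw: "pword n ua" "pword n ub" "pword n fac" "pword n fbc"
    using cm_valid va vb vc c1 c2 c3 c4 by blast+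
  have nf: "rv fuel ua ub \<noteq> NoFuel" using ok c1 c2 c3 c4 unfolding cube_ok_def by (auto split: res.splits)
  from rv_complete(1)[OF H, rule_format, OF nf, of Z1 Z2] pw pz len e
  obtain q' p' Z0 where r: "rv fuel ua ub = Ok q' p'" and Z0: "peq n Z1 (q' @ Z0)" "peq n Z2 (p' @ Z0)"
    by auto
  have pqp: "pword n q'" "pword n p'" using rv_sound(1)[OF r] pw by auto
  from ok c1 c2 c3 c4 r obtain u u' where cab: "cm a b = Some u" "cm b a = Some u'"
    unfolding cube_ok_def by (auto split: res.splits option.splits)
  have "\<exists>T. rv fuel u (fac @ q') = Ok T [] \<and> rv fuel (fbc @ p') (u' @ T) = Ok [] []"
    using ok c1 c2 c3 c4 r cab by (cases "rv fuel u (fac @ q')") (auto simp: cube_ok_def)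
  then obtain T where r2: "rv fuel u (fac @ q') = Ok T []" and r3: "rv fuel (fbc @ p') (u' @ T) = Ok [] []"
    by blast
  have pu: "pword n u" "pword n u'" using cm_valid va vb cab by blast+
  from rv_sound(1)[OF r2] pu pw pqp have s2: "peq n (u @ T) (fac @ q')" "pword n T" by auto
  from rv_sound(1)[OF r3] pu pw pqp s2 have s3: "peq n (fbc @ p') (u' @ T)" by auto
  have "peq n (fac @ Z1) (fac @ q' @ Z0)" using peq_append[OF peq_refl Z0(1)] .
  moreover have "peq n (fac @ q' @ Z0) (u @ T @ Z0)"
    using peq_append[OF peq_sym[OF s2(1)] peq_refl[of n Z0]] by simp
  moreover have "peq n (fbc @ Z2) (fbc @ p' @ Z0)" using peq_append[OF peq_refl Z0(2)] .
  moreover have "peq n (fbc @ p' @ Z0) (u' @ T @ Z0)"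
    using peq_append[OF s3 peq_refl[of n Z0]] by simp
  ultimately show ?thesis using cab by (blast intro: peq_trans)
qed

lemma rels_cm: "(l, r) \<in> rels n \<Longrightarrow> \<exists>c d l' r'. l = c # l' \<and> r = d # r' \<and> cm c d = Some l' \<and> cm d c = Some r'"
  unfolding rels_def by (auto simp: adj_def)

lemma Rel_sym: "Rel n a A b B \<Longrightarrow> Rel n b B a A"
  unfolding Rel_def by blast

lemma step_Rel: "(c # C, d # D) \<in> step n \<Longrightarrow> Rel n c C d D"
proof -
  assume "(c # C, d # D) \<in> step n"
  then obtain u l r v where e: "c # C = u @ l @ v" "d # D = u @ r @ v" and lr: "(l, r) \<in> rels n"
    unfolding step_def by blast
  show ?thesis
  proof (cases u)
    case Nil
    from rels_cm[OF lr] obtain c' d' l' r' where "l = c' # l'" "r = d' # r'" "cm c' d' = Some l'" "cm d' c' = Some r'"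
      by blast
    then show ?thesis using e Nil unfolding Rel_def by (intro exI[of _ l'] exI[of _ r'] exI[of _ v]) auto
  next
    case (Cons w u0)
    then have "c = w" "d = w" "C = u0 @ l @ v" "D = u0 @ r @ v" using e by auto
    moreover have "peq n (u0 @ l @ v) (u0 @ r @ v)" using peq_cong[OF rels_peq[OF lr]] .
    ultimately show ?thesis unfolding Rel_def by (intro exI[of _ "[]"] exI[of _ "[]"] exI[of _ D]) auto
  qed
qed

lemma E_Rel: "(c # C, d # D) \<in> step n \<union> (step n)\<inverse> \<Longrightarrow> Rel n c C d D"
  using step_Rel Rel_sym by blast

lemma Rel_trans:
  assumes H: "Hyp n L" and len: "length C \<le> L"
    and va: "valid_letter n a" and vb: "valid_letter n b" and vc: "valid_letter n c"
    and pC: "pword n C"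
    and R1: "Rel n a A c C" and R2: "Rel n c C b B"
  shows "Rel n a A b B"
proof -
  from R1 obtain fac fca Z1 where c3: "cm a c = Some fac" and c1: "cm c a = Some fca"
    and A: "peq n A (fac @ Z1)" and C1: "peq n C (fca @ Z1)" unfolding Rel_def by blast
  from R2 obtain fcb fbc Z2 where c2: "cm c b = Some fcb" and c4: "cm b c = Some fbc"
    and C2: "peq n C (fcb @ Z2)" and B: "peq n B (fbc @ Z2)" unfolding Rel_def by blast
  have pz: "pword n Z1" "pword n Z2" using peq_pword[OF C1 pC] peq_pword[OF C2 pC] by auto
  have e: "peq n (fca @ Z1) (fcb @ Z2)" using C1 C2 by (blast intro: peq_trans peq_sym)
  have l: "length (fca @ Z1) \<le> L" using peq_len[OF C1] len by simp
  from cube[OF H va vb vc c1 c2 c3 c4 pz l e] obtain u u' Z where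
    "cm a b = Some u" "cm b a = Some u'" "peq n (fac @ Z1) (u @ Z)" "peq n (fbc @ Z2) (u' @ Z)" by blast
  then show ?thesis unfolding Rel_def using A B by (blast intro: peq_trans)
qed

lemma Hyp_all: "Hyp n L"
proof (induction L)
  case 0 then show ?case unfolding Hyp_def by simp
next
  case (Suc L)
  show ?case unfolding Hyp_def
  proof (intro allI impI)
    fix a A b B
    assume l: "length A < Suc L" and pa: "pword n (a # A)" and pb: "pword n (b # B)"
      and e: "peq n (a # A) (b # B)"
    show "Rel n a A b B"
    proof (cases "length A < L")
      case True then show ?thesis using Suc pa pb e unfolding Hyp_def by blast
    next
      case False
      then have lA: "length A = L" using l by simp
      have "\<And>c C. W = c # C \<Longrightarrow> Rel n a A c C" if "(a # A, W) \<in> (step n \<union> (step n)\<inverse>)\<^sup>*" for W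
        using that
      proof (induction rule: rtrancl_induct)
        case base then show ?case unfolding Rel_def by (intro exI[of _ "[]"] exI[of _ "[]"] exI[of _ A]) auto
      next
        case (step Y W)
        have pY: "peq n (a # A) Y" using step(1) unfolding peq_def .
        have lY: "length Y = Suc L" using peq_len[OF pY] lA by simp
        then obtain d D where Y: "Y = d # D" by (cases Y) auto
        have IH: "Rel n a A d D" using step(3) Y by blast
        have R2: "Rel n d D c C" using E_Rel step(2) Y step(4) by blast
        have pwY: "pword n Y" using peq_pword[OF pY pa] .
        have "peq n (a # A) W" using step(1) step(2) unfolding peq_def by (rule rtrancl_into_rtrancl)
        then have pwW: "pword n W" using peq_pword pa by blast
        show ?case
          using Rel_trans[OF Suc.IH _ _ _ _ _ IH R2] lY Y pwY pwW step(4) pa by auto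
      qed
      then show ?thesis using e unfolding peq_def by blast
    qed
  qed
qed

lemma main_left:
  assumes "valid_letter n a" "valid_letter n b" "pword n A" "pword n B" "peq n (a # A) (b # B)"
  shows "Rel n a A b B"
  using Hyp_all[of n "Suc (length A)"] assms unfolding Hyp_def by auto

lemma Rel_get:
  assumes "Rel n a A b B" "pword n A" "cm a b = Some u" "cm b a = Some u'"
  shows "\<exists>Z. pword n Z \<and> peq n A (u @ Z) \<and> peq n B (u' @ Z)"
  using assms peq_pword unfolding Rel_def by fastforce


lemma left_all:
  assumes "valid_letter n a" "valid_letter n b" "pword n A" "pword n B" "peq n (a # A) (b # B)"
    "cm a b = Some u" "cm b a = Some u'"
  shows "\<exists>Z. pword n Z \<and> peq n A (u @ Z) \<and> peq n B (u' @ Z)"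
  using Rel_get[OF main_left[OF assms(1-5)] assms(3,6,7)] .

lemma left_none:
  assumes "valid_letter n a" "valid_letter n b" "pword n A" "pword n B" "cm a b = None"
  shows "\<not> peq n (a # A) (b # B)"
  using main_left[OF assms(1-4)] assms(5) unfolding Rel_def by auto

lemma left_eq:
  assumes "valid_letter n a" "pword n A" "pword n B" "peq n (a # A) (a # B)"
  shows "peq n A B"
  using left_all[OF assms(1,1,2,3,4) cm_refl cm_refl] by (auto intro: peq_trans peq_sym)

lemma snoc_rev: "peq n (A @ [a]) (B @ [b]) \<Longrightarrow> peq n (a # rev A) (b # rev B)"
  using peq_rev by fastforce

lemma right_all:
  assumes "valid_letter n a" "valid_letter n b" "pword n A" "pword n B" "peq n (A @ [a]) (B @ [b])"
    "cm a b = Some u" "cm b a = Some u'"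
  shows "\<exists>Z. pword n Z \<and> peq n A (Z @ rev u) \<and> peq n B (Z @ rev u')"
proof -
  obtain Z where "pword n Z" "peq n (rev A) (u @ Z)" "peq n (rev B) (u' @ Z)"
    using left_all[OF assms(1,2) _ _ snoc_rev[OF assms(5)] assms(6,7)] assms(3,4) by auto
  then have "pword n (rev Z)" "peq n A (rev Z @ rev u)" "peq n B (rev Z @ rev u')"
    using peq_rev by fastforce+
  then show ?thesis by blast
qed

lemma right_none:
  assumes "valid_letter n a" "valid_letter n b" "pword n A" "pword n B" "cm a b = None"
  shows "\<not> peq n (A @ [a]) (B @ [b])"
  using left_none[OF assms(1,2) _ _ assms(5), of "rev A" "rev B"] assms(3,4) snoc_rev by auto

lemma right_eq:
  assumes "valid_letter n a" "pword n A" "pword n B" "peq n (A @ [a]) (B @ [a])"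
  shows "peq n A B"
  using right_all[OF assms(1,1,2,3,4) cm_refl cm_refl] by (auto intro: peq_trans peq_sym)

theorem proposition2p1:
  fixes n i k :: nat and A B :: "letter list"
  assumes "n \<ge> 2" and "pword n A" and "pword n B"
    and "1 \<le> i" and "i < n" and "1 \<le> k" and "k < n"
  shows
   \<comment> \<open>(1) left\<close>
   "(peq n (S i # A) (S k # B) \<longrightarrow>
       (k = i \<longrightarrow> peq n A B)
     \<and> (\<bar>int k - int i\<bar> = 1 \<longrightarrow> (\<exists>Z. pword n Z \<and> peq n A ([S k, S i] @ Z) \<and> peq n B ([S i, S k] @ Z)))
     \<and> (\<bar>int k - int i\<bar> \<ge> 2 \<longrightarrow> (\<exists>Z. pword n Z \<and> peq n A (S k # Z) \<and> peq n B (S i # Z))))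
  \<and> \<comment> \<open>(2) left\<close>
    (peq n (S i # A) (X k # B) \<longrightarrow>
       (\<bar>int k - int i\<bar> = 1 \<longrightarrow> (\<exists>Z. pword n Z \<and> peq n A ([S k, X i] @ Z) \<and> peq n B ([S i, S k] @ Z)))
     \<and> (\<bar>int k - int i\<bar> \<noteq> 1 \<longrightarrow> (\<exists>Z. pword n Z \<and> peq n A (X k # Z) \<and> peq n B (S i # Z))))
  \<and> \<comment> \<open>(3) left\<close>
    (peq n (X i # A) (X k # B) \<longrightarrow>
       (k = i \<longrightarrow> peq n A B)
     \<and> (\<bar>int k - int i\<bar> \<ge> 2 \<longrightarrow> (\<exists>Z. pword n Z \<and> peq n A (X k # Z) \<and> peq n B (X i # Z))))
  \<and> (\<bar>int k - int i\<bar> = 1 \<longrightarrow> \<not> peq n (X i # A) (X k # B))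
  \<and> \<comment> \<open>(1) right\<close>
    (peq n (A @ [S i]) (B @ [S k]) \<longrightarrow>
       (k = i \<longrightarrow> peq n A B)
     \<and> (\<bar>int k - int i\<bar> = 1 \<longrightarrow> (\<exists>Z. pword n Z \<and> peq n A (Z @ [S i, S k]) \<and> peq n B (Z @ [S k, S i])))
     \<and> (\<bar>int k - int i\<bar> \<ge> 2 \<longrightarrow> (\<exists>Z. pword n Z \<and> peq n A (Z @ [S k]) \<and> peq n B (Z @ [S i]))))
  \<and> \<comment> \<open>(2) right\<close>
    (peq n (A @ [S i]) (B @ [X k]) \<longrightarrow>
       (\<bar>int k - int i\<bar> = 1 \<longrightarrow> (\<exists>Z. pword n Z \<and> peq n A (Z @ [X i, S k]) \<and> peq n B (Z @ [S k, S i])))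
     \<and> (\<bar>int k - int i\<bar> \<noteq> 1 \<longrightarrow> (\<exists>Z. pword n Z \<and> peq n A (Z @ [X k]) \<and> peq n B (Z @ [S i]))))
  \<and> \<comment> \<open>(3) right\<close>
    (peq n (A @ [X i]) (B @ [X k]) \<longrightarrow>
       (k = i \<longrightarrow> peq n A B)
     \<and> (\<bar>int k - int i\<bar> \<ge> 2 \<longrightarrow> (\<exists>Z. pword n Z \<and> peq n A (Z @ [X k]) \<and> peq n B (Z @ [X i]))))
  \<and> (\<bar>int k - int i\<bar> = 1 \<longrightarrow> \<not> peq n (A @ [X i]) (B @ [X k]))"
proof -
  have v: "valid_letter n (S i)" "valid_letter n (S k)" "valid_letter n (X i)" "valid_letter n (X k)"
    using assms by (auto simp: valid_letter_def)
  have a1: "(\<bar>int k - int i\<bar> = 1) = adj i k" "adj k i = adj i k" by (auto simp: adj_def)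
  have a2: "(\<bar>int k - int i\<bar> \<ge> 2) = (\<not> adj i k \<and> i \<noteq> k)" by (auto simp: adj_def)
  note LA = left_all[OF _ _ assms(2,3)] and RA = right_all[OF _ _ assms(2,3)]
  show ?thesis
    unfolding a1 a2
    apply (intro conjI impI)
    subgoal using left_eq[OF v(1) assms(2,3)] by simp
    subgoal using LA[OF v(1,2), where u="[S k, S i]" and u'="[S i, S k]"] by (auto simp: adj_def)
    subgoal using LA[OF v(1,2), where u="[S k]" and u'="[S i]"] by (auto simp: adj_def)
    subgoal using LA[OF v(1,4), where u="[S k, X i]" and u'="[S i, S k]"] by (auto simp: adj_def)
    subgoal using LA[OF v(1,4), where u="[X k]" and u'="[S i]"] by (auto simp: adj_def)
    subgoal using left_eq[OF v(3) assms(2,3)] by simp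
    subgoal using LA[OF v(3,4), where u="[X k]" and u'="[X i]"] by (auto simp: adj_def)
    subgoal using left_none[OF v(3,4) assms(2,3)] by (auto simp: adj_def)
    subgoal using right_eq[OF v(1) assms(2,3)] by simp
    subgoal using RA[OF v(1,2), where u="[S k, S i]" and u'="[S i, S k]"] by (auto simp: adj_def)
    subgoal using RA[OF v(1,2), where u="[S k]" and u'="[S i]"] by (auto simp: adj_def)
    subgoal using RA[OF v(1,4), where u="[S k, X i]" and u'="[S i, S k]"] by (auto simp: adj_def)
    subgoal using RA[OF v(1,4), where u="[X k]" and u'="[S i]"] by (auto simp: adj_def)
    subgoal using right_eq[OF v(3) assms(2,3)] by simp
    subgoal using RA[OF v(3,4), where u="[X k]" and u'="[X i]"] by (auto simp: adj_def)
    subgoal using right_none[OF v(3,4) assms(2,3)] by (auto simp: adj_def)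
    done
qed

end
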